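(* Let $C\subseteq 2^X$ be an isometric concept class and let $(c_1,\dots,c_m)$ be an ordering of all concepts of $C$; write $C_i=\{c_1,\dots,c_i\}$ for $1\le i\le m$. The following are equivalent: (1) every $C_i$ is ample; (2) for every $i$, $c_i$ is a corner of $C_i$; (3) every $C_i$ is isometric; (4) every $C_i$ is weakly isometric.
   Context: $X$ is a finite set; a concept class is $C\subseteq 2^X$. $C|Y=\{c\cap Y:c\in C\}$; $Y$ is shattered by $C$ if $C|Y=2^Y$. A cube of $2^X$ is $B=\{T\cup Z:Z\subseteq Y\}$ with $Y\subseteq X$, $T\subseteq X\setminus Y$; $Y$ is its support; a cube of $C$ is a cube $B\subseteq C$. $C$ is ample if every set shattered by $C$ is the support of a cube of $C$. A concept $c\in C$ is a corner of $C$ if it lies in exactly one inclusion-maximal cube of $C$. $G(C)$ is the graph on $C$ joining $c,c'$ when $|c\Delta c'|=1$; $d(c,c')=|c\Delta c'|$ is the Hamming distance. $C$ is isometric if $G(C)$ is connected and the graph distance in $G(C)$ equals $d(c,c')$ for all $c,c'\in C$; $C$ is weakly isometric if $G(C)$ is connected and the graph distance equals $d(c,c')$ for all $c,c'\in C$ with $d(c,c')\le 2$. *)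

theory Defs
  imports Main
begin

definition restrict_class :: "'a set set \<Rightarrow> 'a set \<Rightarrow> 'a set set" where
  "restrict_class C Y = {c \<inter> Y | c. c \<in> C}"

definition shattered :: "'a set set \<Rightarrow> 'a set \<Rightarrow> bool" where
  "shattered C Y \<longleftrightarrow> restrict_class C Y = Pow Y"

definition cube :: "'a set \<Rightarrow> 'a set \<Rightarrow> 'a set set" where
  "cube T Y = {T \<union> Z | Z. Z \<subseteq> Y}"

definition is_cube :: "'a set \<Rightarrow> 'a set set \<Rightarrow> bool" where
  "is_cube X B \<longleftrightarrow> (\<exists>Y T. Y \<subseteq> X \<and> T \<subseteq> X - Y \<and> B = cube T Y)"

definition ample :: "'a set \<Rightarrow> 'a set set \<Rightarrow> bool" where
  "ample X C \<longleftrightarrow> (\<forall>Y. Y \<subseteq> X \<longrightarrow> shattered C Y \<longrightarrow>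
      (\<exists>T. T \<subseteq> X - Y \<and> cube T Y \<subseteq> C))"

definition maximal_cube :: "'a set \<Rightarrow> 'a set set \<Rightarrow> 'a set set \<Rightarrow> bool" where
  "maximal_cube X C B \<longleftrightarrow> is_cube X B \<and> B \<subseteq> C \<and>
      \<not> (\<exists>B'. is_cube X B' \<and> B' \<subseteq> C \<and> B \<subset> B')"

definition corner :: "'a set \<Rightarrow> 'a set set \<Rightarrow> 'a set \<Rightarrow> bool" where
  "corner X C c \<longleftrightarrow> c \<in> C \<and> (\<exists>!B. maximal_cube X C B \<and> c \<in> B)"

definition symdiff :: "'a set \<Rightarrow> 'a set \<Rightarrow> 'a set" where
  "symdiff a b = (a - b) \<union> (b - a)"

definition hdist :: "'a set \<Rightarrow> 'a set \<Rightarrow> nat" where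
  "hdist a b = card (symdiff a b)"

definition adj :: "'a set set \<Rightarrow> 'a set \<Rightarrow> 'a set \<Rightarrow> bool" where
  "adj C a b \<longleftrightarrow> a \<in> C \<and> b \<in> C \<and> hdist a b = 1"

text \<open>A walk in G(C) given as a nonempty list of vertices; its length is length p - 1.\<close>
definition walk :: "'a set set \<Rightarrow> 'a set list \<Rightarrow> 'a set \<Rightarrow> 'a set \<Rightarrow> bool" where
  "walk C p a b \<longleftrightarrow> p \<noteq> [] \<and> hd p = a \<and> last p = b \<and> set p \<subseteq> C \<and>
      (\<forall>i. Suc i < length p \<longrightarrow> adj C (p ! i) (p ! Suc i))"

definition connected_class :: "'a set set \<Rightarrow> bool" where
  "connected_class C \<longleftrightarrow> (\<forall>a\<in>C. \<forall>b\<in>C. \<exists>p. walk C p a b)"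

definition gdist :: "'a set set \<Rightarrow> 'a set \<Rightarrow> 'a set \<Rightarrow> nat" where
  "gdist C a b = (LEAST n. \<exists>p. walk C p a b \<and> length p = Suc n)"

definition isometric :: "'a set set \<Rightarrow> bool" where
  "isometric C \<longleftrightarrow> connected_class C \<and> (\<forall>a\<in>C. \<forall>b\<in>C. gdist C a b = hdist a b)"

definition weakly_isometric :: "'a set set \<Rightarrow> bool" where
  "weakly_isometric C \<longleftrightarrow> connected_class C \<and>
     (\<forall>a\<in>C. \<forall>b\<in>C. hdist a b \<le> 2 \<longrightarrow> gdist C a b = hdist a b)"

end

theory Submission
  imports Defs
begin

lemma symdiff_comm: "symdiff a b = symdiff b a"
  by (auto simp: symdiff_def)

lemma hdist_comm: "hdist a b = hdist b a"
  by (simp add: hdist_def symdiff_comm)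

lemma symdiff_self_eq: "symdiff c u = S \<Longrightarrow> u = symdiff c S"
  by (auto simp: symdiff_def)

lemma symdiff_symdiff: "symdiff c (symdiff c S) = S"
  by (auto simp: symdiff_def)

lemma hdist_0: "finite a \<Longrightarrow> finite b \<Longrightarrow> hdist a b = 0 \<longleftrightarrow> a = b"
  by (auto simp: hdist_def symdiff_def)

lemma hdist_tri: "finite a \<Longrightarrow> finite b \<Longrightarrow> finite c \<Longrightarrow> hdist a c \<le> hdist a b + hdist b c"
proof -
  assume f: "finite a" "finite b" "finite c"
  have "symdiff a c \<subseteq> symdiff a b \<union> symdiff b c" by (auto simp: symdiff_def)
  hence "card (symdiff a c) \<le> card (symdiff a b \<union> symdiff b c)"
    by (intro card_mono) (use f in \<open>auto simp: symdiff_def\<close>)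
  also have "\<dots> \<le> card (symdiff a b) + card (symdiff b c)" by (rule card_Un_le)
  finally show ?thesis by (simp add: hdist_def)
qed

lemma hdist1_iff: "hdist c u = 1 \<longleftrightarrow> (\<exists>e. u = symdiff c {e})"
proof
  assume "hdist c u = 1"
  then obtain e where "symdiff c u = {e}" by (auto simp: hdist_def card_1_singleton_iff)
  thus "\<exists>e. u = symdiff c {e}" using symdiff_self_eq by blast
next
  assume "\<exists>e. u = symdiff c {e}"
  then obtain e where "u = symdiff c {e}" by blast
  thus "hdist c u = 1" by (simp add: hdist_def symdiff_symdiff)
qed

lemma hdist_flip: "finite c \<Longrightarrow> finite d \<Longrightarrow>
  hdist (symdiff c {e}) d = (if e \<in> symdiff c d then hdist c d - 1 else hdist c d + 1)"
proof -
  assume f: "finite c" "finite d"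
  have fin: "finite (symdiff c d)" using f by (simp add: symdiff_def)
  have eq: "symdiff (symdiff c {e}) d = (if e \<in> symdiff c d then symdiff c d - {e} else insert e (symdiff c d))"
    by (auto simp: symdiff_def)
  show ?thesis using fin by (simp add: hdist_def eq card_insert_if)
qed

lemma hdist_flip1: "hdist x (symdiff x {e}) = 1"
  by (simp add: hdist_def symdiff_symdiff)

lemma symdiff_ne: "R \<noteq> {} \<Longrightarrow> symdiff c R \<noteq> c"
  by (auto simp: symdiff_def)

lemma cube_at: "T \<inter> Y = {} \<Longrightarrow> c \<in> cube T Y \<Longrightarrow> T = c - Y"
  by (auto simp: cube_def)

lemma cube_flip: "x \<in> cube T Y \<Longrightarrow> y \<in> Y \<Longrightarrow> T \<inter> Y = {} \<Longrightarrow> symdiff x {y} \<in> cube T Y"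
proof -
  assume "x \<in> cube T Y" "y \<in> Y" "T \<inter> Y = {}"
  then obtain Z where Z: "x = T \<union> Z" "Z \<subseteq> Y" by (auto simp: cube_def)
  have "symdiff x {y} = T \<union> symdiff Z {y}" using Z \<open>y \<in> Y\<close> \<open>T \<inter> Y = {}\<close> by (auto simp: symdiff_def)
  moreover have "symdiff Z {y} \<subseteq> Y" using Z \<open>y \<in> Y\<close> by (auto simp: symdiff_def)
  ultimately show ?thesis by (auto simp: cube_def)
qed

lemma cube_flip_in: "x \<in> cube T Y \<Longrightarrow> symdiff x {e} \<in> cube T Y \<Longrightarrow> T \<inter> Y = {} \<Longrightarrow> e \<in> Y"
  by (auto simp: cube_def symdiff_def)

lemma cube_mono_at: "Y \<subseteq> S \<Longrightarrow> cube (c - Y) Y \<subseteq> cube (c - S) S"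
proof
  fix x assume "Y \<subseteq> S" "x \<in> cube (c - Y) Y"
  then obtain Z where Z: "x = (c - Y) \<union> Z" "Z \<subseteq> Y" by (auto simp: cube_def)
  have "x = (c - S) \<union> ((c \<inter> (S - Y)) \<union> Z)" using Z \<open>Y \<subseteq> S\<close> by auto
  moreover have "(c \<inter> (S - Y)) \<union> Z \<subseteq> S" using Z \<open>Y \<subseteq> S\<close> by auto
  ultimately show "x \<in> cube (c - S) S" by (auto simp: cube_def)
qed

lemma cube_at_symdiff: "cube (c - S) S = {symdiff c R | R. R \<subseteq> S}"
proof (intro set_eqI iffI)
  fix x assume "x \<in> cube (c - S) S"
  then obtain Z where Z: "x = (c - S) \<union> Z" "Z \<subseteq> S" by (auto simp: cube_def)
  have "x = symdiff c (symdiff (c \<inter> S) Z)" using Z by (auto simp: symdiff_def)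
  moreover have "symdiff (c \<inter> S) Z \<subseteq> S" using Z by (auto simp: symdiff_def)
  ultimately show "x \<in> {symdiff c R | R. R \<subseteq> S}" by blast
next
  fix x assume "x \<in> {symdiff c R | R. R \<subseteq> S}"
  then obtain R where R: "x = symdiff c R" "R \<subseteq> S" by blast
  have "x = (c - S) \<union> symdiff (c \<inter> S) R" using R by (auto simp: symdiff_def)
  moreover have "symdiff (c \<inter> S) R \<subseteq> S" using R by (auto simp: symdiff_def)
  ultimately show "x \<in> cube (c - S) S" by (auto simp: cube_def)
qed

lemma ample_empty: "ample X {}"
  by (auto simp: ample_def shattered_def restrict_class_def)

lemma walk_single: "walk C [x] a b \<longleftrightarrow> x = a \<and> x = b \<and> x \<in> C"
  by (auto simp: walk_def)

lemma walk_cons2: "walk C (x # y # p) a b \<longleftrightarrow> x = a \<and> adj C x y \<and> walk C (y # p) y b"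
proof
  assume w: "walk C (x # y # p) a b"
  have all: "\<forall>i. Suc i < length (x # y # p) \<longrightarrow> adj C ((x # y # p) ! i) ((x # y # p) ! Suc i)"
    using w unfolding walk_def by (elim conjE)
  have xa: "x = a" using w unfolding walk_def by (elim conjE) simp
  have lb: "last (y # p) = b" using w unfolding walk_def by (elim conjE) simp
  have sC: "set (y # p) \<subseteq> C" using w unfolding walk_def by (elim conjE) simp
  have "adj C x y" using all[rule_format, of 0] by simp
  moreover have "\<forall>i. Suc i < length (y # p) \<longrightarrow> adj C ((y # p) ! i) ((y # p) ! Suc i)"
  proof (intro allI impI)
    fix i assume "Suc i < length (y # p)"
    hence "Suc (Suc i) < length (x # y # p)" by simp
    from all[rule_format, OF this] show "adj C ((y # p) ! i) ((y # p) ! Suc i)" by simp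
  qed
  ultimately show "x = a \<and> adj C x y \<and> walk C (y # p) y b" using xa lb sC unfolding walk_def by simp
next
  assume h: "x = a \<and> adj C x y \<and> walk C (y # p) y b"
  have all: "\<forall>i. Suc i < length (y # p) \<longrightarrow> adj C ((y # p) ! i) ((y # p) ! Suc i)"
    using h unfolding walk_def by (elim conjE)
  have lb: "last (y # p) = b" using h unfolding walk_def by (elim conjE) simp
  have sC: "set (y # p) \<subseteq> C" using h unfolding walk_def by (elim conjE) simp
  have xC: "x \<in> C" using h unfolding adj_def by blast
  show "walk C (x # y # p) a b" unfolding walk_def
  proof (intro conjI allI impI)
    fix i assume i: "Suc i < length (x # y # p)"
    show "adj C ((x # y # p) ! i) ((x # y # p) ! Suc i)"
    proof (cases i)
      case 0 thus ?thesis using conjunct1[OF conjunct2[OF h]] by simp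
    next
      case (Suc j) thus ?thesis using all i by simp
    qed
  qed (use h lb sC xC in simp_all)
qed

lemma walk_nonempty: "walk C p a b \<Longrightarrow> p \<noteq> []" by (simp add: walk_def)

lemma walk_in: "walk C p a b \<Longrightarrow> a \<in> C \<and> b \<in> C"
  unfolding walk_def by (metis hd_in_set last_in_set subsetD)

lemma walk_bound:
  assumes "finite X" "C \<subseteq> Pow X"
  shows "walk C p a b \<Longrightarrow> hdist a b \<le> length p - 1"
proof (induction p arbitrary: a)
  case Nil thus ?case by (simp add: walk_def)
next
  case (Cons x p)
  show ?case
  proof (cases p)
    case Nil thus ?thesis using Cons.prems by (auto simp: walk_single hdist_def symdiff_def)
  next
    case (Cons y q)
    hence Cons2: "p = y # q" .
    have w0: "x = a \<and> adj C x y \<and> walk C (y # q) y b" using Cons.prems unfolding Cons2 walk_cons2 .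
    hence w: "x = a" "adj C x y" "walk C (y # q) y b" by blast+
    have ih: "hdist y b \<le> length q" using Cons.IH[of y] w Cons2 by simp
    have fin: "finite a" "finite y" "finite b" using w walk_in[OF w(3)] assms
      by (auto simp: adj_def intro: finite_subset)
    have "hdist a b \<le> hdist a y + hdist y b" using hdist_tri fin by blast
    thus ?thesis using w ih Cons2 by (simp add: adj_def)
  qed
qed

lemma gdist_intro:
  assumes "finite X" "C \<subseteq> Pow X" "walk C p a b" "length p = Suc (hdist a b)"
  shows "gdist C a b = hdist a b"
  unfolding gdist_def
proof (rule Least_equality)
  show "\<exists>p. walk C p a b \<and> length p = Suc (hdist a b)" using assms by blast
next
  fix n assume "\<exists>p. walk C p a b \<and> length p = Suc n"
  then obtain q where "walk C q a b" "length q = Suc n" by blast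
  thus "hdist a b \<le> n" using walk_bound[OF assms(1,2)] by fastforce
qed

lemma isometric_intro:
  assumes "finite X" "C \<subseteq> Pow X"
    and "\<And>a b. a \<in> C \<Longrightarrow> b \<in> C \<Longrightarrow> \<exists>p. walk C p a b \<and> length p = Suc (hdist a b)"
  shows "isometric C"
  unfolding isometric_def connected_class_def
  using assms gdist_intro[OF assms(1,2)] by blast

lemma isometric_walk:
  assumes "finite X" "C \<subseteq> Pow X" "isometric C" "a \<in> C" "b \<in> C"
  shows "\<exists>p. walk C p a b \<and> length p = Suc (hdist a b)"
proof -
  obtain p where p: "walk C p a b" using assms unfolding isometric_def connected_class_def by blast
  hence ex: "\<exists>n p. walk C p a b \<and> length p = Suc n"
    by (metis Suc_pred length_greater_0_conv walk_nonempty)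
  have "\<exists>p. walk C p a b \<and> length p = Suc (gdist C a b)"
    unfolding gdist_def by (rule LeastI_ex) (use ex in blast)
  moreover have "gdist C a b = hdist a b" using assms unfolding isometric_def by blast
  ultimately show ?thesis by simp
qed

lemma weak_mid:
  assumes "weakly_isometric D" "u \<in> D" "w \<in> D" "hdist u w = 2"
  shows "\<exists>z\<in>D. hdist u z = 1 \<and> hdist z w = 1"
proof -
  obtain p where p: "walk D p u w" using assms unfolding weakly_isometric_def connected_class_def by blast
  hence ex: "\<exists>n p. walk D p u w \<and> length p = Suc n"
    by (metis Suc_pred length_greater_0_conv walk_nonempty)
  have "\<exists>p. walk D p u w \<and> length p = Suc (gdist D u w)"
    unfolding gdist_def by (rule LeastI_ex) (use ex in blast)
  moreover have "gdist D u w = 2" using assms unfolding weakly_isometric_def by auto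
  ultimately obtain q where q: "walk D q u w" "length q = 3" by auto
  then obtain x y z where "q = [x, y, z]"
    by (metis (no_types) length_0_conv length_Suc_conv numeral_3_eq_3)
  with q show ?thesis by (auto simp: walk_cons2 walk_single adj_def)
qed

lemma walk_prepend:
  assumes "walk D q y b" "adj D a y"
  shows "walk D (a # q) a b"
proof -
  obtain r where q: "q = y # r" using assms(1) unfolding walk_def by (cases q) auto
  show ?thesis using assms unfolding q walk_cons2 by blast
qed

lemma rep_iso:
  assumes fX: "finite X" and EX: "E \<subseteq> Pow X" and iso: "isometric E" and Dd: "D = E - {c}"
    and P: "\<And>u w. u \<in> D \<Longrightarrow> w \<in> D \<Longrightarrow> hdist c u = 1 \<Longrightarrow> hdist c w = 1 \<Longrightarrow> hdist u w = 2
             \<Longrightarrow> \<exists>z\<in>D. hdist u z = 1 \<and> hdist z w = 1"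
  shows "isometric D"
proof -
  have DX: "D \<subseteq> Pow X" using EX Dd by auto
  have fin: "\<And>v. v \<in> E \<Longrightarrow> finite v" using EX fX by (auto intro: finite_subset)
  have main: "\<And>n a p. b \<in> D \<Longrightarrow> a \<in> D \<Longrightarrow> walk E p a b \<Longrightarrow> length p = Suc n \<Longrightarrow> hdist a b = n
          \<Longrightarrow> \<exists>q. walk D q a b \<and> length q = Suc n" for b
  proof -
    fix n a p
    assume bD: "b \<in> D"
    show "a \<in> D \<Longrightarrow> walk E p a b \<Longrightarrow> length p = Suc n \<Longrightarrow> hdist a b = n
          \<Longrightarrow> \<exists>q. walk D q a b \<and> length q = Suc n"
    proof (induction n arbitrary: a p rule: less_induct)
      case (less n a p)
      have bE: "b \<in> E" using bD Dd by auto
      have aE: "a \<in> E" using less.prems Dd by auto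
      show ?case
      proof (cases n)
        case 0
        hence "a = b" using less.prems hdist_0 fin aE bE by blast
        thus ?thesis using 0 less.prems walk_single[of D a a b] by auto
      next
        case (Suc n1)
        obtain x y r where p: "p = x # y # r" using less.prems Suc
          by (metis length_Suc_conv)
        have w: "x = a" "adj E a y" "walk E (y # r) y b"
          using less.prems(2) unfolding p walk_cons2 by blast+
        have yE: "y \<in> E" "hdist a y = 1" using w by (auto simp: adj_def)
        have lr: "length r = n1" using less.prems Suc p by simp
        have yb_le: "hdist y b \<le> n1" using walk_bound[OF fX EX w(3)] lr by simp
        have "n \<le> hdist a y + hdist y b" using hdist_tri[OF fin[OF aE] fin[OF yE(1)] fin[OF bE]] less.prems(4) by simp
        hence yb: "hdist y b = n1" using yb_le yE Suc by simp
        show ?thesis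
        proof (cases "y = c")
          case False
          hence yD: "y \<in> D" using yE Dd by auto
          obtain q' where q': "walk D q' y b" "length q' = Suc n1"
            using less.IH[of n1 y "y # r"] Suc yD w lr yb by auto
          have "adj D a y" using less.prems yD yE by (simp add: adj_def)
          hence "walk D (a # q') a b" using walk_prepend q' by blast
          thus ?thesis using q' Suc by auto
        next
          case True
          have "y \<noteq> b" using True bD Dd by auto
          hence "n1 \<noteq> 0" using yb hdist_0[OF fin[OF yE(1)] fin[OF bE]] by simp
          then obtain n2 where n2: "n1 = Suc n2" by (cases n1) auto
          obtain z0 r2 where r: "r = z0 # r2" using lr n2 by (cases r) auto
          have w2: "adj E c z0" "walk E (z0 # r2) z0 b"
            using w(3) True unfolding r walk_cons2 by blast+
          have z0E: "z0 \<in> E" "hdist c z0 = 1" using w2 by (auto simp: adj_def)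
          have "z0 \<noteq> c" using z0E(2) hdist_0[OF fin[OF z0E(1)] fin[OF z0E(1)]] by auto
          hence z0D: "z0 \<in> D" using z0E Dd by auto
          have z0b_le: "hdist z0 b \<le> n2" using walk_bound[OF fX EX w2(2)] lr r n2 by simp
          have az0_le: "hdist a z0 \<le> 2" using hdist_tri[OF fin[OF aE] fin[OF yE(1)] fin[OF z0E(1)]] z0E yE True by simp
          have "n \<le> hdist a z0 + hdist z0 b" using hdist_tri[OF fin[OF aE] fin[OF z0E(1)] fin[OF bE]] less.prems(4) by simp
          hence az0: "hdist a z0 = 2" and z0b: "hdist z0 b = n2"
            using az0_le z0b_le Suc n2 by auto
          have ca: "hdist c a = 1" using yE True hdist_comm[of a c] by simp
          obtain z where z: "z \<in> D" "hdist a z = 1" "hdist z z0 = 1"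
            using P[OF less.prems(1) z0D ca z0E(2) az0] by blast
          have zE: "z \<in> E" using z Dd by auto
          have "walk E (z # z0 # r2) z b" using w2(2) z zE z0E unfolding walk_cons2 by (simp add: adj_def)
          moreover have "length (z # z0 # r2) = Suc n1" using lr r by simp
          moreover have "hdist z b = n1"
          proof -
            have "hdist z b \<le> hdist z z0 + hdist z0 b" using hdist_tri[OF fin[OF zE] fin[OF z0E(1)] fin[OF bE]] .
            moreover have "hdist a b \<le> hdist a z + hdist z b" using hdist_tri[OF fin[OF aE] fin[OF zE] fin[OF bE]] .
            ultimately show ?thesis using z z0b less.prems Suc n2 by simp
          qed
          ultimately obtain q' where q': "walk D q' z b" "length q' = Suc n1"
            using less.IH[of n1 z "z # z0 # r2"] Suc z by auto
          have "adj D a z" using less.prems z by (simp add: adj_def)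
          hence "walk D (a # q') a b" using walk_prepend q' by blast
          thus ?thesis using q' Suc by auto
        qed
      qed
    qed
  qed
  show ?thesis
  proof (rule isometric_intro[OF fX DX])
    fix a b assume ab: "a \<in> D" "b \<in> D"
    then obtain p where "walk E p a b" "length p = Suc (hdist a b)"
      using isometric_walk[OF fX EX iso] Dd by blast
    thus "\<exists>p. walk D p a b \<and> length p = Suc (hdist a b)" using main ab by blast
  qed
qed

lemma L1:
  assumes "finite X" "E \<subseteq> Pow X" "isometric E" "weakly_isometric (E - {c})"
  shows "isometric (E - {c})"
  by (rule rep_iso[OF assms(1,2,3) refl]) (use weak_mid[OF assms(4)] in blast)

lemma exists_maximal:
  assumes fX: "finite X" and EX: "E \<subseteq> Pow X" and B: "is_cube X B" "B \<subseteq> E"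
  shows "\<exists>B'. maximal_cube X E B' \<and> B \<subseteq> B'"
proof -
  let ?A = "{B'. is_cube X B' \<and> B' \<subseteq> E}"
  have fE: "finite E" using finite_subset[OF EX] fX by simp
  have AE: "?A \<subseteq> Pow E" by blast
  have fA: "finite ?A" using finite_subset[OF AE] fE by simp
  have BA: "B \<in> ?A" using B by simp
  obtain m where m1: "m \<in> ?A" and m2: "B \<le> m" and m3: "\<forall>b\<in>?A. m \<le> b \<longrightarrow> m = b"
    using finite_has_maximal2[OF fA BA] by (elim bexE conjE) (rule that)
  have "maximal_cube X E m" unfolding maximal_cube_def
  proof (intro conjI notI)
    show "is_cube X m" "m \<subseteq> E" using m1 by simp_all
    assume "\<exists>B'. is_cube X B' \<and> B' \<subseteq> E \<and> m \<subset> B'"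
    then obtain B' where "is_cube X B'" "B' \<subseteq> E" "m \<subset> B'" by (elim exE conjE) (rule that)
    thus False using m3 by blast
  qed
  thus ?thesis using m2 by (intro exI[of _ m] conjI)
qed

lemma is_cube_disj: "is_cube X B \<Longrightarrow> \<exists>T Y. Y \<subseteq> X \<and> T \<inter> Y = {} \<and> B = cube T Y"
  unfolding is_cube_def by blast

lemma edge_cube:
  assumes "e \<in> X" "c \<subseteq> X"
  shows "is_cube X (cube (c - {e}) {e})" "cube (c - {e}) {e} = {c, symdiff c {e}}"
proof -
  show "is_cube X (cube (c - {e}) {e})" unfolding is_cube_def
    by (rule exI[of _ "{e}"], rule exI[of _ "c - {e}"]) (use assms in auto)
  have "{symdiff c R |R. R \<subseteq> {e}} = {c, symdiff c {e}}"
  proof (intro set_eqI iffI)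
    fix x assume "x \<in> {symdiff c R |R. R \<subseteq> {e}}"
    then obtain R where R: "x = symdiff c R" "R \<subseteq> {e}" by blast
    from R(2) have "R = {} \<or> R = {e}" by (rule subset_singletonD)
    moreover have "symdiff c {} = c" by (simp add: symdiff_def)
    ultimately show "x \<in> {c, symdiff c {e}}" using R(1) by blast
  next
    fix x assume x: "x \<in> {c, symdiff c {e}}"
    have "c = symdiff c {}" by (simp add: symdiff_def)
    hence "c \<in> {symdiff c R |R. R \<subseteq> {e}}" by blast
    moreover have "symdiff c {e} \<in> {symdiff c R |R. R \<subseteq> {e}}" by blast
    ultimately show "x \<in> {symdiff c R |R. R \<subseteq> {e}}" using x by blast
  qed
  thus "cube (c - {e}) {e} = {c, symdiff c {e}}" by (simp add: cube_at_symdiff)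
qed

lemma sd2: "e \<noteq> f \<Longrightarrow> symdiff (symdiff c {e}) {f} \<noteq> c"
  unfolding symdiff_def by blast

lemma sd3: "symdiff (symdiff c {e}) {f} = symdiff (symdiff c {f}) {e}"
  unfolding symdiff_def by blast

lemma L4:
  assumes fX: "finite X" and EX: "E \<subseteq> Pow X" and iso: "isometric E" and cor: "corner X E c"
  shows "isometric (E - {c})"
proof (rule rep_iso[OF fX EX iso refl])
  fix u w assume u: "u \<in> E - {c}" and w: "w \<in> E - {c}" and cu: "hdist c u = 1" and cw: "hdist c w = 1"
    and uw: "hdist u w = 2"
  have cE: "c \<in> E" using cor by (simp add: corner_def)
  have ex1: "\<exists>!B. maximal_cube X E B \<and> c \<in> B" using cor by (simp add: corner_def)
  then obtain B where B: "maximal_cube X E B" "c \<in> B" and uniq: "\<And>B'. maximal_cube X E B' \<Longrightarrow> c \<in> B' \<Longrightarrow> B' = B"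
    by (elim ex1E) blast
  have cX: "c \<subseteq> X" using cE EX by auto
  obtain e where e: "u = symdiff c {e}" using cu unfolding hdist1_iff by blast
  obtain f where f: "w = symdiff c {f}" using cw unfolding hdist1_iff by blast
  have inB: "symdiff c {g} \<in> B" if g: "symdiff c {g} \<in> E" for g
  proof -
    have "g \<in> X" using g EX cX unfolding symdiff_def by blast
    note ec = edge_cube[OF this cX]
    have "cube (c - {g}) {g} \<subseteq> E" using ec(2) g cE by auto
    then obtain B' where "maximal_cube X E B'" "cube (c - {g}) {g} \<subseteq> B'"
      using exists_maximal[OF fX EX ec(1)] by blast
    moreover hence "B' = B" using uniq ec(2) by auto
    ultimately show ?thesis using ec(2) by auto
  qed
  have uB: "u \<in> B" using inB[of e] e u by simp
  have wB: "w \<in> B" using inB[of f] f w by simp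
  have cubeB: "is_cube X B" and BE: "B \<subseteq> E" using B(1) unfolding maximal_cube_def by blast+
  from is_cube_disj[OF cubeB] obtain T Z where TZ0: "Z \<subseteq> X \<and> T \<inter> Z = {} \<and> B = cube T Z"
    by (elim exE) (rule that)
  hence TZ: "Z \<subseteq> X" "T \<inter> Z = {}" "B = cube T Z" by blast+
  have cT: "c \<in> cube T Z" using B(2) TZ(3) by simp
  have fT: "symdiff c {f} \<in> cube T Z" using wB f TZ(3) by simp
  have fZ: "f \<in> Z" by (rule cube_flip_in[OF cT fT TZ(2)])
  let ?z = "symdiff u {f}"
  have uT: "u \<in> cube T Z" using uB TZ(3) by simp
  have zB: "?z \<in> B" using cube_flip[OF uT fZ TZ(2)] TZ(3) by simp
  have zE: "?z \<in> E" using zB BE by blast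
  have "e \<noteq> f"
  proof
    assume "e = f" hence "u = w" using e f by simp
    thus False using uw by (simp add: hdist_def symdiff_def)
  qed
  hence "?z \<noteq> c" using e sd2 by simp
  moreover have "hdist u ?z = 1" by (rule hdist_flip1)
  moreover have "?z = symdiff w {e}" using e f sd3 by simp
  hence "hdist ?z w = 1" using hdist_flip1[of w e] hdist_comm[of w ?z] by simp
  ultimately show "\<exists>z\<in>E - {c}. hdist u z = 1 \<and> hdist z w = 1" using zE by blast
qed

lemma ampleD: "ample X C \<Longrightarrow> Y \<subseteq> X \<Longrightarrow> shattered C Y \<Longrightarrow> \<exists>T. T \<subseteq> X - Y \<and> cube T Y \<subseteq> C"
  unfolding ample_def by simp
lemma restrictD: "P \<in> restrict_class C Y \<Longrightarrow> \<exists>x\<in>C. x \<inter> Y = P"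
  unfolding restrict_class_def by auto
lemma restrictI: "x \<in> C \<Longrightarrow> x \<inter> Y = P \<Longrightarrow> P \<in> restrict_class C Y"
  unfolding restrict_class_def by auto
lemma shatteredD: "shattered C Y \<Longrightarrow> P \<subseteq> Y \<Longrightarrow> \<exists>x\<in>C. x \<inter> Y = P"
  unfolding shattered_def by (intro restrictD) auto

lemma restrict_mono: "A \<subseteq> B \<Longrightarrow> restrict_class A Y \<subseteq> restrict_class B Y"
  by (auto simp: restrict_class_def)

lemma restrict_sub: "restrict_class A Y \<subseteq> Pow Y"
  by (auto simp: restrict_class_def)

lemma shattered_mono: "A \<subseteq> B \<Longrightarrow> shattered A Y \<Longrightarrow> shattered B Y"
  unfolding shattered_def
  by (rule equalityI[OF restrict_sub], drule restrict_mono[of _ _ Y], simp)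

lemma ample_section:
  assumes amp: "ample X C" and eX: "e \<in> X"
  shows "ample X {x\<in>C. (e \<in> x) = v}"
  unfolding ample_def
proof (intro allI impI)
  let ?C0 = "{x\<in>C. (e \<in> x) = v}"
  fix Y assume YX: "Y \<subseteq> X" and sh: "shattered ?C0 Y"
  have eY: "e \<notin> Y"
  proof
    assume eY: "e \<in> Y"
    let ?P = "if v then {} else {e}"
    have "?P \<in> restrict_class ?C0 Y" using sh eY unfolding shattered_def by auto
    then obtain x where "x \<in> ?C0" "x \<inter> Y = ?P" unfolding restrict_class_def by blast
    thus False using eY by (cases v) auto
  qed
  have shC: "shattered C Y" using shattered_mono[OF _ sh] by blast
  obtain T where T: "T \<subseteq> X - Y" "cube T Y \<subseteq> C" using ampleD[OF amp YX shC] by (elim exE conjE)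
  show "\<exists>T. T \<subseteq> X - Y \<and> cube T Y \<subseteq> ?C0"
  proof (cases "(e \<in> T) = v")
    case True
    have "cube T Y \<subseteq> ?C0" using T True eY by (auto simp: cube_def)
    thus ?thesis using T by blast
  next
    case False
    have shY: "shattered C (insert e Y)" unfolding shattered_def
    proof (rule equalityI[OF restrict_sub subsetI])
      fix P assume P: "P \<in> Pow (insert e Y)"
      show "P \<in> restrict_class C (insert e Y)"
      proof (cases "(e \<in> P) = v")
        case True
        have "P - {e} \<in> restrict_class ?C0 Y" using sh P unfolding shattered_def by auto
        then obtain x where x: "x \<in> ?C0" "x \<inter> Y = P - {e}" unfolding restrict_class_def by blast
        have "x \<inter> insert e Y = P" using x True by auto
        thus ?thesis using x unfolding restrict_class_def by blast
      next
        case False2: False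
        have "T \<union> (P - {e}) \<in> cube T Y" using P unfolding cube_def by auto
        hence "T \<union> (P - {e}) \<in> C" using T by blast
        moreover have "(T \<union> (P - {e})) \<inter> insert e Y = P" using P T False False2 by auto
        ultimately show ?thesis unfolding restrict_class_def by blast
      qed
    qed
    obtain T' where T': "T' \<subseteq> X - insert e Y" "cube T' (insert e Y) \<subseteq> C"
      using ampleD[OF amp _ shY] YX eX by (metis insert_subset)
    let ?T = "if v then insert e T' else T'"
    have "cube ?T Y \<subseteq> cube T' (insert e Y)" unfolding cube_def
    proof (intro subsetI)
      fix x assume "x \<in> {?T \<union> Z |Z. Z \<subseteq> Y}"
      then obtain Z where Z: "x = ?T \<union> Z" "Z \<subseteq> Y" by blast
      show "x \<in> {T' \<union> Z |Z. Z \<subseteq> insert e Y}"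
      proof (cases v)
        case True thus ?thesis using Z by (intro CollectI exI[of _ "insert e Z"]) auto
      next
        case False thus ?thesis using Z by auto
      qed
    qed
    moreover have "\<forall>x\<in>cube ?T Y. (e \<in> x) = v" using T' eY by (auto simp: cube_def)
    ultimately have "cube ?T Y \<subseteq> ?C0" using T' by auto
    moreover have "?T \<subseteq> X - Y" using T' eX eY by auto
    ultimately show ?thesis by blast
  qed
qed

lemma ample_face_gen:
  assumes amp: "ample X C" and K: "finite K" "K \<subseteq> X"
  shows "ample X {x\<in>C. \<forall>e\<in>K. (e \<in> x) = (e \<in> T)}"
  using K
proof (induction K rule: finite_induct)
  case empty thus ?case using amp by simp
next
  case (insert k K)
  have eq: "{x\<in>C. \<forall>e\<in>insert k K. (e \<in> x) = (e \<in> T)} =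
        {x\<in>{x\<in>C. \<forall>e\<in>K. (e \<in> x) = (e \<in> T)}. (k \<in> x) = (k \<in> T)}" by auto
  show ?case unfolding eq by (rule ample_section) (use insert in auto)
qed

lemma ample_face:
  assumes amp: "ample X C" and fX: "finite X" and CX: "C \<subseteq> Pow X" and cX: "c \<subseteq> X" and RX: "R \<subseteq> X"
  shows "ample X (C \<inter> cube (c - R) R)"
proof -
  have "C \<inter> cube (c - R) R = {x\<in>C. \<forall>e\<in>X - R. (e \<in> x) = (e \<in> c)}"
  proof (intro set_eqI iffI)
    fix x assume "x \<in> C \<inter> cube (c - R) R"
    thus "x \<in> {x\<in>C. \<forall>e\<in>X - R. (e \<in> x) = (e \<in> c)}" by (auto simp: cube_def)
  next
    fix x assume x: "x \<in> {x\<in>C. \<forall>e\<in>X - R. (e \<in> x) = (e \<in> c)}"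
    hence "x \<subseteq> X" using CX by auto
    hence "x = (c - R) \<union> (x \<inter> R)" using x cX by auto
    thus "x \<in> C \<inter> cube (c - R) R" using x unfolding cube_def by blast
  qed
  thus ?thesis using ample_face_gen[OF amp finite_subset[OF _ fX], of "X - R" c] by auto
qed

lemma two_pts: "x1 \<in> {c, s} \<Longrightarrow> x2 \<in> {c, s} \<Longrightarrow> x1 \<noteq> x2 \<Longrightarrow> symdiff x1 x2 = symdiff c s"
  by (auto simp: symdiff_def)

lemma not_ample_NA:
  assumes fR: "finite R" and cR: "card R \<ge> 2" and RX: "R \<subseteq> X" and cX: "c \<subseteq> X"
  shows "\<not> ample X (cube (c - R) R - {c, symdiff c R})"
proof
  let ?s = "symdiff c R"
  let ?G = "cube (c - R) R - {c, ?s}"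
  assume amp: "ample X ?G"
  obtain e where eR: "e \<in> R" using cR by (metis card.empty ex_in_conv not_numeral_le_zero)
  let ?Y = "R - {e}"
  have Rne: "R \<noteq> {e}" using cR by auto
  have sh: "shattered ?G ?Y" unfolding shattered_def
  proof (rule equalityI[OF restrict_sub subsetI])
    fix P assume P: "P \<in> Pow ?Y"
    let ?x1 = "(c - R) \<union> P" and ?x2 = "(c - R) \<union> insert e P"
    have in1: "?x1 \<in> cube (c - R) R" using P eR unfolding cube_def by auto
    have in2: "?x2 \<in> cube (c - R) R" using P eR unfolding cube_def by auto
    have r1: "?x1 \<inter> ?Y = P" using P by auto
    have r2: "?x2 \<inter> ?Y = P" using P by auto
    have "?x1 \<notin> {c, ?s} \<or> ?x2 \<notin> {c, ?s}"
    proof (rule ccontr)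
      assume "\<not> ?thesis"
      hence h: "?x1 \<in> {c, ?s}" "?x2 \<in> {c, ?s}" by auto
      have ne: "?x1 \<noteq> ?x2" using P eR by auto
      have sd: "symdiff ?x1 ?x2 = {e}" using P eR by (auto simp: symdiff_def)
      have "symdiff c ?s = R" by (rule symdiff_symdiff)
      hence "symdiff ?x1 ?x2 = R" using two_pts[OF h ne] by simp
      thus False using sd Rne by simp
    qed
    thus "P \<in> restrict_class ?G ?Y"
    proof
      assume "?x1 \<notin> {c, ?s}"
      hence "?x1 \<in> ?G" using in1 by simp
      thus ?thesis using r1 by (rule restrictI)
    next
      assume "?x2 \<notin> {c, ?s}"
      hence "?x2 \<in> ?G" using in2 by simp
      thus ?thesis using r2 by (rule restrictI)
    qed
  qed
  have YX: "?Y \<subseteq> X" using RX by auto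
  obtain T where T: "T \<subseteq> X - ?Y" "cube T ?Y \<subseteq> ?G" using ampleD[OF amp YX sh] by (elim exE conjE)
  have "T \<in> cube T ?Y" unfolding cube_def by auto
  hence "T \<in> cube (c - R) R" using T by auto
  then obtain W where W: "T = (c - R) \<union> W" "W \<subseteq> R" unfolding cube_def by auto
  have WY: "W \<subseteq> {e}" using W T by auto
  show False
  proof (cases "(e \<in> c) = (e \<in> T)")
    case True
    have "c = T \<union> (c \<inter> ?Y)" using W WY True eR cX by auto
    hence "c \<in> cube T ?Y" unfolding cube_def by auto
    thus False using T by auto
  next
    case False
    have "?s = T \<union> (?s \<inter> ?Y)" using W WY False eR by (auto simp: symdiff_def)
    hence "?s \<in> cube T ?Y" unfolding cube_def by auto
    thus False using T by auto
  qed
qed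

lemma symdiff_empty: "symdiff c {} = c" by (simp add: symdiff_def)

lemma star:
  assumes fX: "finite X" and DX: "D \<subseteq> Pow X" and amp: "ample X D" and cX: "c \<subseteq> X"
    and cD: "c \<notin> D" and SX: "S \<subseteq> X" and nb: "\<And>e. e \<in> S \<Longrightarrow> symdiff c {e} \<in> D"
  shows "R \<subseteq> S \<Longrightarrow> R \<noteq> {} \<Longrightarrow> symdiff c R \<in> D"
proof (induction "card R" arbitrary: R rule: less_induct)
  case less
  have RX: "R \<subseteq> X" using less.prems SX by blast
  have fR: "finite R" using finite_subset[OF RX fX] .
  show ?case
  proof (cases "card R = 1")
    case True
    then obtain e where "R = {e}" by (elim card_1_singletonE)
    thus ?thesis using nb less.prems by simp
  next
    case False
    have "card R \<noteq> 0" using fR less.prems by simp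
    hence c2: "card R \<ge> 2" using False by linarith
    show ?thesis
    proof (rule ccontr)
      assume sD: "symdiff c R \<notin> D"
      let ?F = "cube (c - R) R"
      have eq: "D \<inter> ?F = ?F - {c, symdiff c R}"
      proof (intro equalityI subsetI)
        fix x assume "x \<in> D \<inter> ?F" thus "x \<in> ?F - {c, symdiff c R}" using cD sD by auto
      next
        fix x assume x: "x \<in> ?F - {c, symdiff c R}"
        hence "x \<in> {symdiff c R' |R'. R' \<subseteq> R}" using cube_at_symdiff[of c R] by simp
        then obtain R' where R': "x = symdiff c R'" "R' \<subseteq> R" by (elim CollectE exE conjE) (rule that)
        have "R' \<noteq> {}" using x R' symdiff_empty[of c] by auto
        moreover have "R' \<noteq> R" using x R' by auto
        hence "R' \<subset> R" using R' by auto
        hence "card R' < card R" using psubset_card_mono[OF fR] by simp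
        moreover have "R' \<subseteq> S" using R' less.prems by simp
        ultimately have "symdiff c R' \<in> D" using less.hyps by simp
        thus "x \<in> D \<inter> ?F" using x R' by simp
      qed
      have "ample X (D \<inter> ?F)" by (rule ample_face[OF amp fX DX cX RX])
      thus False using eq not_ample_NA[OF fR c2 RX cX] by simp
    qed
  qed
qed

lemma star0:
  assumes fX: "finite X" and DX: "D \<subseteq> Pow X" and amp: "ample X D" and cX: "c \<subseteq> X"
    and cD: "c \<notin> D" and SX: "S \<subseteq> X" and nb: "\<And>e. e \<in> S \<Longrightarrow> symdiff c {e} \<in> D"
  shows "cube (c - S) S \<subseteq> insert c D"
proof
  fix x assume "x \<in> cube (c - S) S"
  hence "x \<in> {symdiff c R |R. R \<subseteq> S}" using cube_at_symdiff[of c S] by simp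
  then obtain R where R: "x = symdiff c R" "R \<subseteq> S" by (elim CollectE exE conjE) (rule that)
  show "x \<in> insert c D"
  proof (cases "R = {}")
    case True thus ?thesis using R by (simp add: symdiff_empty)
  next
    case False thus ?thesis using R star[OF assms] by simp
  qed
qed

lemma c_in_cube: "c \<in> cube (c - S) S"
proof -
  have "c = (c - S) \<union> (c \<inter> S)" by auto
  thus ?thesis unfolding cube_def by (intro CollectI exI[of _ "c \<inter> S"]) auto
qed

lemma L3:
  assumes fX: "finite X" and DX: "D \<subseteq> Pow X" and amp: "ample X D" and cX: "c \<subseteq> X"
    and cD: "c \<notin> D"
  shows "corner X (insert c D) c"
proof -
  let ?E = "insert c D"
  let ?S = "{e \<in> X. symdiff c {e} \<in> D}"
  let ?B0 = "cube (c - ?S) ?S"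
  have SX: "?S \<subseteq> X" by auto
  have B0E: "?B0 \<subseteq> ?E" by (rule star0[OF fX DX amp cX cD SX]) simp
  have cB0: "c \<in> ?B0" by (rule c_in_cube)
  have cubeB0: "is_cube X ?B0" unfolding is_cube_def
    by (rule exI[of _ ?S], rule exI[of _ "c - ?S"]) (use cX in auto)
  have sub: "B \<subseteq> ?B0" if B: "is_cube X B" "B \<subseteq> ?E" "c \<in> B" for B
  proof -
    from is_cube_disj[OF B(1)] obtain T Y where TY0: "Y \<subseteq> X \<and> T \<inter> Y = {} \<and> B = cube T Y"
      by (elim exE) (rule that)
    hence TY: "Y \<subseteq> X" "T \<inter> Y = {}" "B = cube T Y" by blast+
    have cT: "c \<in> cube T Y" using B(3) TY(3) by simp
    have T: "T = c - Y" by (rule cube_at[OF TY(2) cT])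
    have "Y \<subseteq> ?S"
    proof
      fix y assume y: "y \<in> Y"
      have "symdiff c {y} \<in> cube T Y" by (rule cube_flip[OF cT y TY(2)])
      hence "symdiff c {y} \<in> ?E" using B(2) TY(3) by auto
      moreover have "symdiff c {y} \<noteq> c" by (rule symdiff_ne) simp
      ultimately have "symdiff c {y} \<in> D" by simp
      thus "y \<in> ?S" using y TY(1) by auto
    qed
    hence "cube (c - Y) Y \<subseteq> ?B0" by (rule cube_mono_at)
    thus ?thesis using TY(3) T by simp
  qed
  have maxB0: "maximal_cube X ?E ?B0" unfolding maximal_cube_def
  proof (intro conjI notI)
    show "is_cube X ?B0" by (rule cubeB0)
    show "?B0 \<subseteq> ?E" by (rule B0E)
    assume "\<exists>B'. is_cube X B' \<and> B' \<subseteq> ?E \<and> ?B0 \<subset> B'"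
    then obtain B' where B': "is_cube X B'" "B' \<subseteq> ?E" "?B0 \<subset> B'" by (elim exE conjE) (rule that)
    have "c \<in> B'" using cB0 B'(3) by auto
    hence "B' \<subseteq> ?B0" using sub B'(1,2) by simp
    thus False using B'(3) by auto
  qed
  have "\<exists>!B. maximal_cube X ?E B \<and> c \<in> B"
  proof (rule ex1I[of _ ?B0])
    show "maximal_cube X ?E ?B0 \<and> c \<in> ?B0" using maxB0 cB0 by simp
    fix B assume B: "maximal_cube X ?E B \<and> c \<in> B"
    hence Bc: "is_cube X B" "B \<subseteq> ?E" "c \<in> B" and Bmax: "\<not> (\<exists>B'. is_cube X B' \<and> B' \<subseteq> ?E \<and> B \<subset> B')"
      unfolding maximal_cube_def by simp_all
    have "B \<subseteq> ?B0" using sub Bc by simp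
    show "B = ?B0"
    proof (rule ccontr)
      assume "B \<noteq> ?B0"
      hence "B \<subset> ?B0" using \<open>B \<subseteq> ?B0\<close> by simp
      hence "\<exists>B'. is_cube X B' \<and> B' \<subseteq> ?E \<and> B \<subset> B'" using cubeB0 B0E by (intro exI[of _ ?B0]) simp
      thus False using Bmax by simp
    qed
  qed
  thus ?thesis unfolding corner_def by simp
qed

lemma L2:
  assumes fX: "finite X" and EX: "insert c D \<subseteq> Pow X" and amp: "ample X D" and cD: "c \<notin> D"
    and iso: "isometric (insert c D)"
  shows "ample X (insert c D)"
  unfolding ample_def
proof (intro allI impI)
  let ?E = "insert c D"
  have DX: "D \<subseteq> Pow X" and cX: "c \<subseteq> X" using EX by auto
  have fin: "\<And>v. v \<in> ?E \<Longrightarrow> finite v" using EX fX by (auto intro: finite_subset)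
  fix Y assume YX: "Y \<subseteq> X" and sh: "shattered ?E Y"
  show "\<exists>T. T \<subseteq> X - Y \<and> cube T Y \<subseteq> ?E"
  proof (cases "shattered D Y")
    case True
    obtain T where T: "T \<subseteq> X - Y" "cube T Y \<subseteq> D" using ampleD[OF amp YX True] by (elim exE conjE)
    hence "cube T Y \<subseteq> ?E" by auto
    thus ?thesis using T(1) by (intro exI[of _ T]) simp
  next
    case False
    have fib: "d \<inter> Y \<noteq> c \<inter> Y" if d: "d \<in> D" for d
    proof
      assume dc: "d \<inter> Y = c \<inter> Y"
      have "shattered D Y" unfolding shattered_def
      proof (rule equalityI[OF restrict_sub subsetI])
        fix P assume "P \<in> Pow Y"
        hence "P \<subseteq> Y" by simp
        from shatteredD[OF sh this] obtain x where x: "x \<in> ?E" "x \<inter> Y = P" by (elim bexE) (rule that)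
        show "P \<in> restrict_class D Y"
        proof (cases "x = c")
          case True thus ?thesis using d dc x by (intro restrictI[of d]) simp_all
        next
          case False thus ?thesis using x by (intro restrictI[of x]) simp_all
        qed
      qed
      thus False using False by simp
    qed
    have nb: "symdiff c {y} \<in> D" if y: "y \<in> Y" for y
    proof -
      let ?P = "symdiff (c \<inter> Y) {y}"
      have "?P \<subseteq> Y" using y by (auto simp: symdiff_def)
      from shatteredD[OF sh this] obtain d where d: "d \<in> ?E" "d \<inter> Y = ?P" by (elim bexE) (rule that)
      have "d \<noteq> c"
      proof
        assume "d = c"
        hence "c \<inter> Y = symdiff (c \<inter> Y) {y}" using d by simp
        thus False by (auto simp: symdiff_def)
      qed
      hence dD: "d \<in> D" using d by simp
      obtain p where p: "walk ?E p c d" "length p = Suc (hdist c d)"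
        using isometric_walk[OF fX EX iso] dD by blast
      have "hdist c d \<noteq> 0" using hdist_0[OF fin fin] dD \<open>d \<noteq> c\<close> by simp
      then obtain x y1 r where pr: "p = x # y1 # r"
        using p(2) by (metis length_Suc_conv not0_implies_Suc)
      have w: "adj ?E c y1" "walk ?E (y1 # r) y1 d"
        using p(1) unfolding pr walk_cons2 by blast+
      have lr: "length r = hdist c d - 1" using p(2) pr by simp
      have b: "hdist y1 d \<le> hdist c d - 1" using walk_bound[OF fX EX w(2)] lr by simp
      have y1E: "y1 \<in> ?E" and "hdist c y1 = 1" using w(1) by (simp_all add: adj_def)
      then obtain e where e: "y1 = symdiff c {e}" unfolding hdist1_iff by (elim exE)
      have hf: "hdist y1 d = (if e \<in> symdiff c d then hdist c d - 1 else hdist c d + 1)"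
        unfolding e by (rule hdist_flip[OF fin fin]) (simp_all add: dD)
      have ecd: "e \<in> symdiff c d"
      proof (rule ccontr)
        assume "e \<notin> symdiff c d"
        hence "hdist y1 d = hdist c d + 1" using hf by simp
        thus False using b by simp
      qed
      have y1c: "y1 \<noteq> c" unfolding e by (rule symdiff_ne) simp
      have eY: "e \<in> Y"
      proof (rule ccontr)
        assume "e \<notin> Y"
        hence "y1 \<inter> Y = c \<inter> Y" unfolding e by (auto simp: symdiff_def)
        moreover have "y1 \<in> D" using y1E y1c by simp
        ultimately show False using fib by blast
      qed
      have "e = y"
      proof (rule ccontr)
        assume "e \<noteq> y"
        hence "(e \<in> d) = (e \<in> c)" using d(2) eY by (auto simp: symdiff_def)
        thus False using ecd by (auto simp: symdiff_def)
      qed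
      thus ?thesis using y1E y1c e by simp
    qed
    have "cube (c - Y) Y \<subseteq> ?E" by (rule star0[OF fX DX amp cX cD YX nb])
    moreover have "c - Y \<subseteq> X - Y" using cX by auto
    ultimately show ?thesis by (intro exI[of _ "c - Y"]) simp
  qed
qed

lemma iso_weak: "isometric C \<Longrightarrow> weakly_isometric C"
  unfolding isometric_def weakly_isometric_def by simp

lemma weak_empty: "weakly_isometric {}"
  unfolding weakly_isometric_def connected_class_def by simp

theorem proposition4p1:
  fixes X :: "'a set" and C :: "'a set set" and cs :: "'a set list"
  assumes "finite X" and "C \<subseteq> Pow X" and "isometric C"
    and "distinct cs" and "set cs = C"
  shows "((\<forall>i\<in>{1..length cs}. ample X (set (take i cs)))
            \<longleftrightarrow> (\<forall>i\<in>{1..length cs}. corner X (set (take i cs)) (cs ! (i - 1))))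
       \<and> ((\<forall>i\<in>{1..length cs}. ample X (set (take i cs)))
            \<longleftrightarrow> (\<forall>i\<in>{1..length cs}. isometric (set (take i cs))))
       \<and> ((\<forall>i\<in>{1..length cs}. ample X (set (take i cs)))
            \<longleftrightarrow> (\<forall>i\<in>{1..length cs}. weakly_isometric (set (take i cs))))"
proof -
  note fX = assms(1) and CX = assms(2) and isoC = assms(3) and dist = assms(4) and setC = assms(5)
  define m where "m = length cs"
  define A where "A i = set (take i cs)" for i
  have AX: "A i \<subseteq> Pow X" for i using CX setC set_take_subset[of i cs] unfolding A_def by blast
  have A0: "A 0 = {}" unfolding A_def by simp
  have Am: "A m = C" unfolding A_def m_def using setC by simp
  have Asuc: "A (Suc j) = insert (cs ! j) (A j)" if "j < m" for j
    using that unfolding A_def m_def by (simp add: take_Suc_conv_app_nth)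
  have Anot: "cs ! j \<notin> A j" if "j < m" for j
  proof -
    have "distinct (take (Suc j) cs)" using dist by simp
    thus ?thesis using that unfolding A_def m_def by (simp add: take_Suc_conv_app_nth)
  qed
  have cjX: "cs ! j \<subseteq> X" if "j < m" for j
    using that CX setC unfolding m_def by (metis Pow_iff nth_mem subsetD)
  define P1 where "P1 = (\<forall>i\<in>{1..m}. ample X (A i))"
  define P2 where "P2 = (\<forall>i\<in>{1..m}. corner X (A i) (cs ! (i - 1)))"
  define P3 where "P3 = (\<forall>i\<in>{1..m}. isometric (A i))"
  define P4 where "P4 = (\<forall>i\<in>{1..m}. weakly_isometric (A i))"
  have ampA: "ample X (A j)" if "P1" "j \<le> m" for j
  proof (cases j)
    case 0 thus ?thesis using A0 ample_empty by simp
  next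
    case (Suc k) thus ?thesis using that unfolding P1_def by auto
  qed
  have h12: "P2" if "P1"
    unfolding P2_def
  proof
    fix i assume i: "i \<in> {1..m}"
    then obtain j where j: "i = Suc j" "j < m" by (cases i) auto
    have "corner X (insert (cs ! j) (A j)) (cs ! j)"
      by (rule L3[OF fX AX ampA[OF that] cjX Anot]) (use j in simp_all)
    thus "corner X (A i) (cs ! (i - 1))" using Asuc j by simp
  qed
  have h23: "P3" if "P2"
  proof -
    have "k \<le> m \<Longrightarrow> isometric (A (m - k))" for k
    proof (induction k)
      case 0 thus ?case using Am isoC by simp
    next
      case (Suc k)
      define i where "i = m - k"
      have i: "i \<in> {1..m}" "m - Suc k = i - 1" using Suc.prems unfolding i_def by auto
      have isoi: "isometric (A i)" using Suc unfolding i_def by simp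
      have cor: "corner X (A i) (cs ! (i - 1))" using \<open>P2\<close> i unfolding P2_def by blast
      have "A (i - 1) = A i - {cs ! (i - 1)}"
      proof -
        have lt: "i - 1 < m" using i by auto
        have "Suc (i - 1) = i" using i by auto
        thus ?thesis using Asuc[OF lt] Anot[OF lt] by auto
      qed
      thus ?case using L4[OF fX AX isoi cor] i by simp
    qed
    note key = this
    show ?thesis unfolding P3_def
    proof
      fix i assume "i \<in> {1..m}"
      hence "m - (m - i) = i" "m - i \<le> m" by auto
      thus "isometric (A i)" using key[of "m - i"] by simp
    qed
  qed
  have h31: "P1" if "P3"
  proof -
    have "i \<le> m \<Longrightarrow> ample X (A i)" for i
    proof (induction i)
      case 0 thus ?case using A0 ample_empty by simp
    next
      case (Suc i)
      have iso: "isometric (A (Suc i))" using \<open>P3\<close> Suc.prems unfolding P3_def by auto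
      have lt: "i < m" using Suc.prems by simp
      have ins: "insert (cs ! i) (A i) \<subseteq> Pow X" using AX[of "Suc i"] Asuc[OF lt] by simp
      have ampi: "ample X (A i)" using Suc.IH lt by simp
      have "ample X (insert (cs ! i) (A i))"
        by (rule L2[OF fX ins ampi Anot[OF lt]]) (use iso Asuc[OF lt] in simp)
      thus ?case using Asuc Suc.prems by simp
    qed
    thus ?thesis unfolding P1_def by auto
  qed
  have h34: "P4" if "P3" using that iso_weak unfolding P3_def P4_def by blast
  have h43: "P3" if "P4"
  proof -
    have "k \<le> m \<Longrightarrow> isometric (A (m - k))" for k
    proof (induction k)
      case 0 thus ?case using Am isoC by simp
    next
      case (Suc k)
      define i where "i = m - k"
      have i: "i \<in> {1..m}" "m - Suc k = i - 1" using Suc.prems unfolding i_def by auto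
      have isoi: "isometric (A i)" using Suc unfolding i_def by simp
      have eq: "A (i - 1) = A i - {cs ! (i - 1)}"
      proof -
        have lt: "i - 1 < m" using i by auto
        have "Suc (i - 1) = i" using i by auto
        thus ?thesis using Asuc[OF lt] Anot[OF lt] by auto
      qed
      have "weakly_isometric (A (i - 1))"
      proof (cases "i - 1 = 0")
        case True thus ?thesis using A0 weak_empty by simp
      next
        case False
        hence "i - 1 \<in> {1..m}" using i by auto
        thus ?thesis using \<open>P4\<close> unfolding P4_def by blast
      qed
      hence "weakly_isometric (A i - {cs ! (i - 1)})" using eq by simp
      thus ?case using L1[OF fX AX isoi] eq i by simp
    qed
    note key = this
    show ?thesis unfolding P3_def
    proof
      fix i assume "i \<in> {1..m}"
      hence "m - (m - i) = i" "m - i \<le> m" by auto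
      thus "isometric (A i)" using key[of "m - i"] by simp
    qed
  qed
  have "(P1 \<longleftrightarrow> P2) \<and> (P1 \<longleftrightarrow> P3) \<and> (P1 \<longleftrightarrow> P4)"
    using h12 h23 h31 h34 h43 by blast
  thus ?thesis unfolding P1_def P2_def P3_def P4_def A_def m_def .
qed

end
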